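(* Let $G$ be a Nash equilibrium graph of the sum network creation game with $n$ players and $H\subseteq G$ a non-trivial $2$-edge-connected component, with $g(G)>14$. Then every $2$-path $\pi=u_0-u_1-\dots-u_k$ in $H$ with $k\ge 5$, oriented so that each $u_i$ ($0\le i<k$) has bought the link $(u_i,u_{i+1})$, satisfies $$D(u_5)-D(u_0)\ge 2n-(U_1+U_2+U_3+U_4).$$
   Context: Sum network creation game: players $V=\{1,\dots,n\}$, parameter $\alpha>0$; a strategy of $u$ is $s_u\subseteq V\setminus\{u\}$; $G_s$ has an edge $uv$ whenever $v\in s_u$ or $u\in s_v$, regarded as a digraph with arc $(u,v)$ when $v\in s_u$; the cost of $u$ is $\alpha|s_u|+\sum_{v\ne u}d_{G_s}(u,v)$. A Nash equilibrium graph is $G_s$ for $s$ from which no player can strictly lower his cost unilaterally. $D(u)=\sum_{v\ne u}d_G(u,v)$. A $2$-edge-connected component $H$ is a maximal bridgeless subgraph; non-trivial means at least $3$ vertices. For $u\in V(H)$, $T(u)$ is the connected component containing $u$ of the subgraph induced by $(V(G)\setminus V(H))\cup\{u\}$, and $U_i=|T(u_i)|$. A $2$-path in $H$ is a path $u_0-\dots-u_k$ in $H$ with $deg^-_H(u_i)=deg^+_H(u_i)=1$ for $0<i<k$ (degrees counted over arcs inside $H$). $g(G)$ denotes the girth of $G$. *)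

theory Defs
  imports Main "HOL-Library.Extended_Real"
begin

definition reachable :: "(nat \<Rightarrow> nat \<Rightarrow> bool) \<Rightarrow> nat \<Rightarrow> nat \<Rightarrow> bool" where
  "reachable E a b \<longleftrightarrow> E\<^sup>*\<^sup>* a b"

definition walk_of_len :: "(nat \<Rightarrow> nat \<Rightarrow> bool) \<Rightarrow> nat \<Rightarrow> nat \<Rightarrow> nat \<Rightarrow> bool" where
  "walk_of_len E k u v \<longleftrightarrow>
     (\<exists>p :: nat \<Rightarrow> nat. p 0 = u \<and> p k = v \<and> (\<forall>i<k. E (p i) (p (Suc i))))"

text \<open>Graph distance (only meaningful for reachable pairs).\<close>
definition gdist :: "(nat \<Rightarrow> nat \<Rightarrow> bool) \<Rightarrow> nat \<Rightarrow> nat \<Rightarrow> nat" where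
  "gdist E u v = (LEAST k. walk_of_len E k u v)"

definition has_cycle_len :: "(nat \<Rightarrow> nat \<Rightarrow> bool) \<Rightarrow> nat \<Rightarrow> bool" where
  "has_cycle_len E L \<longleftrightarrow> L \<ge> 3 \<and>
     (\<exists>c :: nat \<Rightarrow> nat. inj_on c {0..<L} \<and> (\<forall>i<L. E (c i) (c (Suc i mod L))))"

definition girth :: "(nat \<Rightarrow> nat \<Rightarrow> bool) \<Rightarrow> enat" where
  "girth E = Inf {enat L | L. has_cycle_len E L}"

definition strategy_profile :: "nat \<Rightarrow> (nat \<Rightarrow> nat set) \<Rightarrow> bool" where
  "strategy_profile n s \<longleftrightarrow> (\<forall>u\<in>{1..n}. s u \<subseteq> {1..n} - {u})"

definition Gs :: "nat \<Rightarrow> (nat \<Rightarrow> nat set) \<Rightarrow> nat \<Rightarrow> nat \<Rightarrow> bool" where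
  "Gs n s x y \<longleftrightarrow> x \<in> {1..n} \<and> y \<in> {1..n} \<and> x \<noteq> y \<and> (y \<in> s x \<or> x \<in> s y)"

definition cost :: "nat \<Rightarrow> real \<Rightarrow> (nat \<Rightarrow> nat set) \<Rightarrow> nat \<Rightarrow> ereal" where
  "cost n \<alpha> s u =
     (if \<forall>v\<in>{1..n}. reachable (Gs n s) u v
      then ereal (\<alpha> * real (card (s u)) + (\<Sum>v\<in>{1..n} - {u}. real (gdist (Gs n s) u v)))
      else \<infinity>)"

definition nash_equilibrium :: "nat \<Rightarrow> real \<Rightarrow> (nat \<Rightarrow> nat set) \<Rightarrow> bool" where
  "nash_equilibrium n \<alpha> s \<longleftrightarrow> strategy_profile n s \<and>
     (\<forall>u\<in>{1..n}. \<forall>s'. s' \<subseteq> {1..n} - {u} \<longrightarrow> cost n \<alpha> s u \<le> cost n \<alpha> (s(u := s')) u)"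

definition Dsum :: "nat \<Rightarrow> (nat \<Rightarrow> nat \<Rightarrow> bool) \<Rightarrow> nat \<Rightarrow> nat" where
  "Dsum n E u = (\<Sum>v\<in>{1..n} - {u}. gdist E u v)"

definition subgraph :: "nat set \<Rightarrow> (nat \<Rightarrow> nat \<Rightarrow> bool) \<Rightarrow> nat set \<Rightarrow> (nat \<Rightarrow> nat \<Rightarrow> bool) \<Rightarrow> bool" where
  "subgraph W F V E \<longleftrightarrow> W \<subseteq> V \<and> (\<forall>x y. F x y \<longrightarrow> x \<in> W \<and> y \<in> W \<and> E x y) \<and> (\<forall>x y. F x y \<longrightarrow> F y x)"

definition connected_sg :: "nat set \<Rightarrow> (nat \<Rightarrow> nat \<Rightarrow> bool) \<Rightarrow> bool" where
  "connected_sg W F \<longleftrightarrow> W \<noteq> {} \<and> (\<forall>a\<in>W. \<forall>b\<in>W. reachable F a b)"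

definition bridgeless_sg :: "nat set \<Rightarrow> (nat \<Rightarrow> nat \<Rightarrow> bool) \<Rightarrow> bool" where
  "bridgeless_sg W F \<longleftrightarrow> connected_sg W F \<and>
     (\<forall>x y. F x y \<longrightarrow> connected_sg W (\<lambda>a b. F a b \<and> {a, b} \<noteq> {x, y}))"

definition two_ec_component :: "nat set \<Rightarrow> (nat \<Rightarrow> nat \<Rightarrow> bool) \<Rightarrow> nat set \<Rightarrow> (nat \<Rightarrow> nat \<Rightarrow> bool) \<Rightarrow> bool" where
  "two_ec_component V E W F \<longleftrightarrow> subgraph W F V E \<and> bridgeless_sg W F \<and>
     \<not> (\<exists>W' F'. subgraph W' F' V E \<and> bridgeless_sg W' F' \<and> W \<subseteq> W' \<and> F \<le> F' \<and> (W, F) \<noteq> (W', F'))"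

definition Tset :: "nat set \<Rightarrow> (nat \<Rightarrow> nat \<Rightarrow> bool) \<Rightarrow> nat set \<Rightarrow> nat \<Rightarrow> nat set" where
  "Tset V E W u = {v. reachable (\<lambda>x y. E x y \<and> x \<in> (V - W) \<union> {u} \<and> y \<in> (V - W) \<union> {u}) u v}"

definition outdeg_H :: "(nat \<Rightarrow> nat set) \<Rightarrow> nat set \<Rightarrow> (nat \<Rightarrow> nat \<Rightarrow> bool) \<Rightarrow> nat \<Rightarrow> nat" where
  "outdeg_H s W F u = card {v\<in>W. F u v \<and> v \<in> s u}"

definition indeg_H :: "(nat \<Rightarrow> nat set) \<Rightarrow> nat set \<Rightarrow> (nat \<Rightarrow> nat \<Rightarrow> bool) \<Rightarrow> nat \<Rightarrow> nat" where
  "indeg_H s W F u = card {v\<in>W. F u v \<and> u \<in> s v}"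

definition two_path :: "(nat \<Rightarrow> nat set) \<Rightarrow> nat set \<Rightarrow> (nat \<Rightarrow> nat \<Rightarrow> bool) \<Rightarrow> (nat \<Rightarrow> nat) \<Rightarrow> nat \<Rightarrow> bool" where
  "two_path s W F u k \<longleftrightarrow>
     inj_on u {0..k} \<and> (\<forall>i\<le>k. u i \<in> W) \<and> (\<forall>i<k. F (u i) (u (Suc i))) \<and>
     (\<forall>i. 0 < i \<and> i < k \<longrightarrow> indeg_H s W F (u i) = 1 \<and> outdeg_H s W F (u i) = 1)"

end

theory Submission
  imports Defs
begin


lemma walk_refl: "walk_of_len E 0 u u"
  unfolding walk_of_len_def by (rule exI[of _ "\<lambda>_. u"]) simp

lemma walk_edge: "E u v \<Longrightarrow> walk_of_len E 1 u v"
  unfolding walk_of_len_def by (rule exI[of _ "\<lambda>i. if i = 0 then u else v"]) simp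

lemma walk_append:
  assumes "walk_of_len E a u v" "walk_of_len E b v w"
  shows "walk_of_len E (a+b) u w"
proof -
  from assms obtain p q where p: "p 0 = u" "p a = v" "\<forall>i<a. E (p i) (p (Suc i))"
    and q: "q 0 = v" "q b = w" "\<forall>i<b. E (q i) (q (Suc i))" unfolding walk_of_len_def by blast
  define r where "r i = (if i \<le> a then p i else q (i - a))" for i
  have "r 0 = u" using p by (simp add: r_def)
  moreover have "r (a+b) = w" using p q by (auto simp add: r_def)
  moreover have "\<forall>i<a+b. E (r i) (r (Suc i))"
  proof (intro allI impI)
    fix i assume i: "i < a+b"
    show "E (r i) (r (Suc i))"
    proof (cases "i < a")
      case True then show ?thesis using p by (simp add: r_def)
    next
      case False
      then have "i - a < b" "Suc i - a = Suc (i - a)" using i by auto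
      then show ?thesis using q False p by (cases "i = a") (auto simp: r_def)
    qed
  qed
  ultimately show ?thesis unfolding walk_of_len_def by blast
qed

lemma walk_rev:
  assumes sym: "\<And>x y. E x y \<Longrightarrow> E y x" and "walk_of_len E k u v"
  shows "walk_of_len E k v u"
proof -
  from assms obtain p where p: "p 0 = u" "p k = v" "\<forall>i<k. E (p i) (p (Suc i))"
    unfolding walk_of_len_def by blast
  define q where "q i = p (k - i)" for i
  have "\<forall>i<k. E (q i) (q (Suc i))"
  proof (intro allI impI)
    fix i assume "i < k"
    then have "E (p (k - Suc i)) (p (Suc (k - Suc i)))" using p by auto
    moreover have "Suc (k - Suc i) = k - i" using \<open>i<k\<close> by auto
    ultimately show "E (q i) (q (Suc i))" using sym by (simp add: q_def)
  qed
  then show ?thesis unfolding walk_of_len_def using p by (intro exI[of _ q]) (simp add: q_def)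
qed

lemma walk_rev_iff:
  assumes sym: "\<And>x y. E x y \<Longrightarrow> E y x"
  shows "walk_of_len E k v u = walk_of_len E k u v"
proof -
  have "\<And>k u v. walk_of_len E k u v \<Longrightarrow> walk_of_len E k v u"
    using walk_rev[where E=E] sym by blast
  then show ?thesis by blast
qed

lemma walk_mono:
  assumes "\<And>x y. E x y \<Longrightarrow> E' x y" "walk_of_len E k u v"
  shows "walk_of_len E' k u v"
  using assms unfolding walk_of_len_def by blast

lemma walk_imp_reach:
  assumes "walk_of_len E k u v" shows "reachable E u v"
proof -
  from assms obtain p where p: "p 0 = u" "p k = v" "\<forall>i<k. E (p i) (p (Suc i))"
    unfolding walk_of_len_def by blast
  have "\<forall>i\<le>k. E\<^sup>*\<^sup>* u (p i)"
  proof (intro allI impI)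
    fix i assume "i \<le> k" then show "E\<^sup>*\<^sup>* u (p i)"
      using p by (induction i) (auto intro: rtranclp.rtrancl_into_rtrancl)
  qed
  then show ?thesis using p unfolding reachable_def by auto
qed

lemma reach_imp_walk:
  assumes "reachable E u v" shows "\<exists>k. walk_of_len E k u v"
proof -
  have "E\<^sup>*\<^sup>* u v" using assms unfolding reachable_def .
  then show ?thesis
  proof (induction rule: rtranclp_induct)
    case base then show ?case using walk_refl by blast
  next
    case (step y z)
    then obtain k where "walk_of_len E k u y" by blast
    then have "walk_of_len E (k+1) u z" using walk_append walk_edge step by blast
    then show ?case by blast
  qed
qed

lemma gdist_le: "walk_of_len E k u v \<Longrightarrow> gdist E u v \<le> k"
  unfolding gdist_def by (rule Least_le)

lemma gdist_walk: "reachable E u v \<Longrightarrow> walk_of_len E (gdist E u v) u v"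
  unfolding gdist_def using reach_imp_walk by (metis LeastI_ex)

lemma gdist_self: "gdist E u u = 0"
  using gdist_le[OF walk_refl] by simp

lemma gdist_edge: "E u v \<Longrightarrow> gdist E u v \<le> 1"
  using gdist_le[OF walk_edge] by simp

lemma gdist_tri:
  assumes "reachable E u v" "reachable E v w"
  shows "gdist E u w \<le> gdist E u v + gdist E v w"
  using gdist_le[OF walk_append[OF gdist_walk[OF assms(1)] gdist_walk[OF assms(2)]]] .

lemma gdist_sym:
  assumes sym: "\<And>x y. E x y \<Longrightarrow> E y x"
  shows "gdist E u v = gdist E v u"
  unfolding gdist_def using walk_rev_iff[OF sym] by simp

lemma gdist_0:
  assumes "reachable E u v" "gdist E u v = 0" shows "u = v"
  using gdist_walk[OF assms(1)] assms(2) unfolding walk_of_len_def by auto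

lemma walk_prefix:
  assumes "p 0 = a" "\<forall>i<L. E (p i) (p (Suc i))" "t \<le> L"
  shows "walk_of_len E t a (p t)"
  using assms unfolding walk_of_len_def by (intro exI[of _ p]) auto

lemma walk_suffix:
  assumes "\<forall>i<L. E (p i) (p (Suc i))" "t \<le> L"
  shows "walk_of_len E (L - t) (p t) (p L)"
  using assms unfolding walk_of_len_def
  by (intro exI[of _ "\<lambda>i. p (t + i)"]) auto

lemma shortest_inj:
  assumes p: "p 0 = a" "p L = b" "\<forall>i<L. E (p i) (p (Suc i))" and L: "L = gdist E a b"
  shows "inj_on p {0..L}"
proof (rule ccontr)
  assume "\<not> inj_on p {0..L}"
  then obtain i j where ij: "i < j" "j \<le> L" "p i = p j"
    unfolding inj_on_def by (metis atLeastAtMost_iff linorder_neqE_nat)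
  define d where "d = j - i"
  define q where "q t = (if t < i then p t else p (t + d))" for t
  have d: "d > 0" "L - d \<ge> i" "d \<le> L" using ij by (auto simp: d_def)
  have "q 0 = a" using p ij by (cases "i = 0") (auto simp: q_def d_def)
  moreover have "q (L - d) = b" using p d by (auto simp: q_def)
  moreover have "\<forall>t<L-d. E (q t) (q (Suc t))"
  proof (intro allI impI)
    fix t assume t: "t < L - d"
    consider "Suc t < i" | "Suc t = i" | "t \<ge> i" by linarith
    then show "E (q t) (q (Suc t))"
    proof cases
      case 1 then show ?thesis using p t d by (auto simp: q_def)
    next
      case 2
      then have "q (Suc t) = p j" using ij by (auto simp: q_def d_def)
      have "q t = p t" using 2 by (simp add: q_def)
      moreover have "t < L" using 2 ij by auto
      then have "E (p t) (p (Suc t))" using p by auto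
      ultimately show ?thesis using \<open>q (Suc t) = p j\<close> 2 ij by metis
    next
      case 3 then show ?thesis using p t d by (auto simp: q_def)
    qed
  qed
  ultimately have "walk_of_len E (L - d) a b" unfolding walk_of_len_def by blast
  then have "gdist E a b \<le> L - d" by (rule gdist_le)
  then show False using L d ij by auto
qed

lemma shortest_avoid:
  assumes p: "p 0 = a" "p L = b" "\<forall>i<L. E (p i) (p (Suc i))" and L: "L = gdist E a b"
    and c: "c \<noteq> a" "gdist E c b \<ge> L"
  shows "walk_of_len (\<lambda>x y. E x y \<and> x \<noteq> c \<and> y \<noteq> c) L a b"
proof -
  have nc: "p t \<noteq> c" if "t \<le> L" for t
  proof (cases "t = 0")
    case True then show ?thesis using p c by auto
  next
    case False
    have "gdist E (p t) b \<le> L - t" using walk_suffix[of L E p t] p(3) that p(2) gdist_le by metis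
    then show ?thesis using False c that by auto
  qed
  show ?thesis unfolding walk_of_len_def using p nc
    by (intro exI[of _ p]) auto
qed




lemma rtranclp_sym:
  assumes "\<And>x y. R x y \<Longrightarrow> R y x" "R\<^sup>*\<^sup>* a b" shows "R\<^sup>*\<^sup>* b a"
  using assms(2)
proof (induction rule: rtranclp_induct)
  case base then show ?case by simp
next
  case (step y z)
  then show ?case using assms(1) by (meson converse_rtranclp_into_rtranclp)
qed

lemma path_reach:
  assumes "\<And>j. a \<le> j \<Longrightarrow> j < b \<Longrightarrow> R (p j) (p (Suc j))" "a \<le> b"
  shows "R\<^sup>*\<^sup>* (p a) (p b)"
  using assms
proof (induction b)
  case 0 then show ?case by simp
next
  case (Suc b)
  show ?case
  proof (cases "a = Suc b")
    case True then show ?thesis by simp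
  next
    case False
    then have "R\<^sup>*\<^sup>* (p a) (p b)" using Suc by auto
    moreover have "R (p b) (p (Suc b))" using Suc False by auto
    ultimately show ?thesis by (rule rtranclp.rtrancl_into_rtrancl)
  qed
qed

lemma rtranclp_mono':
  assumes "\<And>x y. R x y \<Longrightarrow> S x y" "R\<^sup>*\<^sup>* a b" shows "S\<^sup>*\<^sup>* a b"
  using assms(2) by (induction rule: rtranclp_induct) (auto intro: rtranclp.rtrancl_into_rtrancl assms(1))

lemma connected_from:
  assumes sym: "\<And>x y. R x y \<Longrightarrow> R y x" and r: "r \<in> W" and all: "\<And>a. a \<in> W \<Longrightarrow> R\<^sup>*\<^sup>* r a"
  shows "connected_sg W R"
  unfolding connected_sg_def reachable_def
proof (intro conjI ballI)
  show "W \<noteq> {}" using r by auto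
  fix a b assume "a \<in> W" "b \<in> W"
  then have "R\<^sup>*\<^sup>* r a" "R\<^sup>*\<^sup>* r b" using all by blast+
  then have "R\<^sup>*\<^sup>* a r" "R\<^sup>*\<^sup>* r b" using rtranclp_sym[of R, OF sym] by blast+
  then show "R\<^sup>*\<^sup>* a b" by simp
qed

lemma doubleton_eq: "({a, b} = {c, d}) = ((a = c \<and> b = d) \<or> (a = d \<and> b = c))"
  by (auto simp: doubleton_eq_iff)

lemma ear_contra:
  assumes comp: "two_ec_component V E W F"
    and symE: "\<And>x y. E x y \<Longrightarrow> E y x"
    and m: "m \<ge> 1"
    and ends: "p 0 \<in> W" "p m \<in> W" "p 0 \<noteq> p m"
    and inter: "\<And>i. 0 < i \<Longrightarrow> i < m \<Longrightarrow> p i \<in> V - W"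
    and inj: "inj_on p {0..m}"
    and edges: "\<And>i. i < m \<Longrightarrow> E (p i) (p (Suc i))"
    and new: "m \<ge> 2 \<or> \<not> F (p 0) (p 1)"
  shows False
proof -
  have sg: "subgraph W F V E" and bl: "bridgeless_sg W F"
    and max: "\<not> (\<exists>W' F'. subgraph W' F' V E \<and> bridgeless_sg W' F' \<and> W \<subseteq> W' \<and> F \<le> F' \<and> (W, F) \<noteq> (W', F'))"
    using comp unfolding two_ec_component_def by auto
  have WV: "W \<subseteq> V" and FW: "\<And>x y. F x y \<Longrightarrow> x \<in> W \<and> y \<in> W \<and> E x y"
    and Fsym: "\<And>x y. F x y \<Longrightarrow> F y x" using sg unfolding subgraph_def by auto
  have Fconn: "connected_sg W F" and Frem: "\<And>x y. F x y \<Longrightarrow> connected_sg W (\<lambda>a b. F a b \<and> {a, b} \<noteq> {x, y})"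
    using bl unfolding bridgeless_sg_def by auto
  define PE where "PE x y \<longleftrightarrow> (\<exists>i<m. (x = p i \<and> y = p (Suc i)) \<or> (y = p i \<and> x = p (Suc i)))" for x y
  define F' where "F' x y \<longleftrightarrow> F x y \<or> PE x y" for x y
  define W' where "W' = W \<union> p ` {0..m}"
  have pV: "p i \<in> V" if "i \<le> m" for i
    using ends inter WV that by (cases "i = 0"; cases "i = m") auto
  have pW': "p i \<in> W'" if "i \<le> m" for i using that by (auto simp: W'_def)
  have K: "{a, b} \<noteq> {p i, p (Suc i)}" if "F a b" "i < m" for a b i
  proof
    assume eq: "{a, b} = {p i, p (Suc i)}"
    have ab: "a \<in> W" "b \<in> W" using FW that by auto
    show False
    proof (cases "m \<ge> 2")
      case True
      then have "p i \<notin> W \<or> p (Suc i) \<notin> W"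
        using inter that(2) by (cases "i = 0") auto
      then show False using eq ab by (auto simp: doubleton_eq)
    next
      case False
      then have "m = 1" "i = 0" using m that by auto
      then have "\<not> F (p 0) (p 1)" using new by auto
      then show False using eq that(1) Fsym \<open>i = 0\<close> by (auto simp: doubleton_eq)
    qed
  qed
  have PEsym: "PE x y \<Longrightarrow> PE y x" for x y unfolding PE_def by blast
  have F'sym: "\<And>x y. F' x y \<Longrightarrow> F' y x" using Fsym PEsym by (auto simp: F'_def)
  have PE_E: "PE x y \<Longrightarrow> x \<in> W' \<and> y \<in> W' \<and> E x y" for x y
    unfolding PE_def using pW' edges symE by (auto simp: Suc_le_eq)
  have sg': "subgraph W' F' V E"
  proof -
    have "W' \<subseteq> V" using WV pV by (auto simp: W'_def)
    moreover have "\<forall>x y. F' x y \<longrightarrow> x \<in> W' \<and> y \<in> W' \<and> E x y"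
      using FW PE_E by (auto simp: F'_def W'_def)
    ultimately show ?thesis unfolding subgraph_def using F'sym by blast
  qed
  have p0W: "p 0 \<in> W" using ends by simp
  have Wreach: "\<And>R a. (\<And>x y. F x y \<Longrightarrow> R x y) \<Longrightarrow> a \<in> W \<Longrightarrow> R\<^sup>*\<^sup>* (p 0) a"
    using Fconn p0W unfolding connected_sg_def reachable_def by (meson rtranclp_mono')
  have conn': "connected_sg W' F'"
  proof (rule connected_from[where r="p 0", OF F'sym])
    show "p 0 \<in> W'" by (simp add: W'_def)
    fix a assume "a \<in> W'"
    then consider "a \<in> W" | i where "i \<le> m" "a = p i" by (auto simp: W'_def)
    then show "F'\<^sup>*\<^sup>* (p 0) a"
    proof cases
      case 1 then show ?thesis using Wreach[of F'] by (auto simp: F'_def)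
    next
      case 2
      have "F'\<^sup>*\<^sup>* (p 0) (p i)"
      proof (rule path_reach[where p=p])
        fix j assume "0 \<le> j" "j < i"
        then have "j < m" using 2 by auto
        then show "F' (p j) (p (Suc j))" unfolding F'_def PE_def by blast
      qed simp
      then show ?thesis using 2 by simp
    qed
  qed
  have rem': "connected_sg W' (\<lambda>a b. F' a b \<and> {a, b} \<noteq> {x, y})" if xy: "F' x y" for x y
  proof -
    define R where "R a b \<longleftrightarrow> F' a b \<and> {a, b} \<noteq> {x, y}" for a b
    have Rsym: "\<And>a b. R a b \<Longrightarrow> R b a" using F'sym by (auto simp: R_def insert_commute)
    have "connected_sg W' R"
    proof (rule connected_from[where r="p 0", OF Rsym])
      show "p 0 \<in> W'" by (simp add: W'_def)
      fix a assume aW': "a \<in> W'"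
      show "R\<^sup>*\<^sup>* (p 0) a"
      proof (cases "F x y")
        case True
        have rW: "R\<^sup>*\<^sup>* (p 0) b" if "b \<in> W" for b
        proof -
          have "reachable (\<lambda>a b. F a b \<and> {a, b} \<noteq> {x, y}) (p 0) b"
            using Frem[OF True] p0W that unfolding connected_sg_def by auto
          then show ?thesis unfolding reachable_def
            by (rule rtranclp_mono'[rotated]) (auto simp: R_def F'_def)
        qed
        from aW' consider "a \<in> W" | i where "i \<le> m" "a = p i" by (auto simp: W'_def)
        then show ?thesis
        proof cases
          case 1 then show ?thesis by (rule rW)
        next
          case 2
          have "R\<^sup>*\<^sup>* (p 0) (p i)"
          proof (rule path_reach[where p=p])
            fix j assume "0 \<le> j" "j < i"
            then have "j < m" using 2 by auto
            then show "R (p j) (p (Suc j))"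
              using K[OF True \<open>j < m\<close>] by (auto simp: R_def F'_def PE_def)
          qed simp
          then show ?thesis using 2 by simp
        qed
      next
        case False
        then have "PE x y" using xy by (auto simp: F'_def)
        then obtain kk where kk: "kk < m" "{x, y} = {p kk, p (Suc kk)}"
          unfolding PE_def by (auto simp: insert_commute)
        have FR: "F a b \<Longrightarrow> R a b" for a b using K[of a b kk] kk by (auto simp: R_def F'_def)
        have rW: "R\<^sup>*\<^sup>* (p 0) b" if "b \<in> W" for b using Wreach[of R b] FR that by blast
        have inj': "p i = p j \<Longrightarrow> i \<le> m \<Longrightarrow> j \<le> m \<Longrightarrow> i = j" for i j
          using inj unfolding inj_on_def by auto
        have edgeR: "R (p j) (p (Suc j))" if "j < m" "j \<noteq> kk" for j
        proof -
          have "{p j, p (Suc j)} \<noteq> {p kk, p (Suc kk)}"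
          proof
            assume "{p j, p (Suc j)} = {p kk, p (Suc kk)}"
            then have "(p j = p kk \<and> p (Suc j) = p (Suc kk)) \<or> (p j = p (Suc kk) \<and> p (Suc j) = p kk)"
              by (simp add: doubleton_eq)
            then show False using inj'[of j kk] inj'[of j "Suc kk"] inj'[of "Suc j" kk] that kk
              by auto
          qed
          then show ?thesis using that kk by (auto simp: R_def F'_def PE_def)
        qed
        from aW' consider "a \<in> W" | i where "i \<le> m" "a = p i" by (auto simp: W'_def)
        then show ?thesis
        proof cases
          case 1 then show ?thesis by (rule rW)
        next
          case (2 i)
          show ?thesis
          proof (cases "i \<le> kk")
            case True
            have "R\<^sup>*\<^sup>* (p 0) (p i)"
              by (rule path_reach[where p=p]) (use True kk edgeR in auto)
            then show ?thesis using 2 by simp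
          next
            case False
            have "R\<^sup>*\<^sup>* (p i) (p m)"
              by (rule path_reach[where p=p]) (use False 2 kk edgeR in auto)
            then have "R\<^sup>*\<^sup>* (p m) (p i)" using rtranclp_sym[of R, OF Rsym] by blast
            moreover have "R\<^sup>*\<^sup>* (p 0) (p m)" using rW ends by simp
            ultimately show ?thesis using 2 by simp
          qed
        qed
      qed
    qed
    then show ?thesis unfolding R_def .
  qed
  have bl': "bridgeless_sg W' F'" unfolding bridgeless_sg_def using conn' rem' by blast
  have sub: "W \<subseteq> W'" "F \<le> F'" by (auto simp: W'_def F'_def)
  have neq: "(W, F) \<noteq> (W', F')"
  proof (cases "m \<ge> 2")
    case True
    then have "p 1 \<in> W'" "p 1 \<notin> W" using pW' inter by auto
    then show ?thesis by auto
  next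
    case False
    then have "m = 1" using m by auto
    then have "F' (p 0) (p 1)" "\<not> F (p 0) (p 1)" using new by (auto simp: F'_def PE_def)
    then show ?thesis by auto
  qed
  show False using max sg' bl' sub neq by blast
qed




lemma card1_eq: "card S = 1 \<Longrightarrow> a \<in> S \<Longrightarrow> b \<in> S \<Longrightarrow> a = b"
  by (metis card_1_singletonE singletonD)

locale NEs =
  fixes n :: nat and \<alpha> :: real and s :: "nat \<Rightarrow> nat set"
    and W :: "nat set" and F :: "nat \<Rightarrow> nat \<Rightarrow> bool"
    and u :: "nat \<Rightarrow> nat" and k :: nat
  assumes ne: "nash_equilibrium n \<alpha> s"
    and comp: "two_ec_component {1..n} (Gs n s) W F"
    and gir: "girth (Gs n s) > 14"
    and tp: "two_path s W F u k"
    and k5: "k \<ge> 5"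
    and orient: "\<forall>i<k. u (Suc i) \<in> s (u i)"
begin

abbreviation "V \<equiv> {1..n::nat}"
abbreviation "E \<equiv> Gs n s"
definition T :: "nat \<Rightarrow> nat set" where "T i = Tset V E W (u i)"

lemma Esym: "E x y \<Longrightarrow> E y x" unfolding Gs_def by auto
lemma EV: "E x y \<Longrightarrow> x \<in> V \<and> y \<in> V \<and> x \<noteq> y" unfolding Gs_def by auto

lemma conn: assumes "x \<in> V" "y \<in> V" shows "reachable E x y"
proof -
  define s' where "s' = s(x := V - {x})"
  have "cost n \<alpha> s x \<le> cost n \<alpha> s' x"
    using ne assms(1) unfolding nash_equilibrium_def s'_def by blast
  moreover have "\<forall>v\<in>V. reachable (Gs n s') x v"
  proof
    fix v assume v: "v \<in> V"
    show "reachable (Gs n s') x v"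
    proof (cases "v = x")
      case True then show ?thesis unfolding reachable_def by simp
    next
      case False
      then have "Gs n s' x v" using v assms(1) unfolding Gs_def s'_def by auto
      then show ?thesis unfolding reachable_def by auto
    qed
  qed
  ultimately have fin: "cost n \<alpha> s x \<noteq> \<infinity>"
  proof -
    assume le: "cost n \<alpha> s x \<le> cost n \<alpha> s' x" and r: "\<forall>v\<in>V. reachable (Gs n s') x v"
    have "cost n \<alpha> s' x \<noteq> \<infinity>" using r unfolding cost_def[of n \<alpha> s'] by simp
    then show ?thesis using le by (metis ereal_infty_less_eq(1))
  qed
  have "\<forall>v\<in>V. reachable E x v"
  proof (rule ccontr)
    assume "\<not> (\<forall>v\<in>V. reachable E x v)"
    then have "cost n \<alpha> s x = \<infinity>" unfolding cost_def by simp
    with fin show False by simp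
  qed
  then show ?thesis using assms(2) by blast
qed

lemma sg: "subgraph W F V E" using comp unfolding two_ec_component_def by auto
lemma WV: "W \<subseteq> V" using sg unfolding subgraph_def by auto
lemma FE: "F x y \<Longrightarrow> E x y" using sg unfolding subgraph_def by auto
lemma Fsym: "F x y \<Longrightarrow> F y x" using sg unfolding subgraph_def by auto

lemma uW: "i \<le> k \<Longrightarrow> u i \<in> W" using tp unfolding two_path_def by auto
lemma uV: "i \<le> k \<Longrightarrow> u i \<in> V" using uW WV by (meson subsetD)
lemma uinj: "i \<le> k \<Longrightarrow> j \<le> k \<Longrightarrow> u i = u j \<Longrightarrow> i = j"
  using tp unfolding two_path_def inj_on_def by auto
lemma uF: "i < k \<Longrightarrow> F (u i) (u (Suc i))" using tp unfolding two_path_def by auto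
lemma uE: "i < k \<Longrightarrow> E (u i) (u (Suc i))" using uF FE by auto

lemma interior_nb:
  assumes i: "1 \<le> i" "i < k" and e: "E (u i) y" and y: "y \<in> W"
  shows "y = u (i - 1) \<or> y = u (Suc i)"
proof (cases "F (u i) y")
  case True
  have deg: "indeg_H s W F (u i) = 1" "outdeg_H s W F (u i) = 1"
    using tp i unfolding two_path_def by auto
  have "y \<in> s (u i) \<or> u i \<in> s y" using e unfolding Gs_def by auto
  then show ?thesis
  proof
    assume "y \<in> s (u i)"
    moreover have "u (Suc i) \<in> s (u i)" "F (u i) (u (Suc i))" "u (Suc i) \<in> W"
      using orient uF uW i by auto
    ultimately have "y \<in> {v\<in>W. F (u i) v \<and> v \<in> s (u i)}" "u (Suc i) \<in> {v\<in>W. F (u i) v \<and> v \<in> s (u i)}"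
      using True y by auto
    then have "y = u (Suc i)" using card1_eq deg(2)[unfolded outdeg_H_def] by metis
    then show ?thesis by simp
  next
    assume "u i \<in> s y"
    moreover have "u i \<in> s (u (i-1))" "F (u i) (u (i-1))" "u (i-1) \<in> W"
      using orient[rule_format, of "i-1"] uF[of "i-1"] Fsym uW i by auto
    ultimately have "y \<in> {v\<in>W. F (u i) v \<and> u i \<in> s v}" "u (i-1) \<in> {v\<in>W. F (u i) v \<and> u i \<in> s v}"
      using True y by auto
    then have "y = u (i-1)" using card1_eq deg(1)[unfolded indeg_H_def] by metis
    then show ?thesis by simp
  qed
next
  case False
  define p where "p t = (if t = 0 then u i else y)" for t :: nat
  have "False"
  proof (rule ear_contra[OF comp Esym, where m=1 and p=p])
    show "p 0 \<in> W" "p 1 \<in> W" using uW i y by (auto simp: p_def)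
    show "p 0 \<noteq> p 1" using EV[OF e] by (auto simp: p_def)
    show "inj_on p {0..1}" using EV[OF e] by (auto simp: p_def inj_on_def)
    show "\<And>t. t < 1 \<Longrightarrow> E (p t) (p (Suc t))" using e by (auto simp: p_def)
    show "2 \<le> 1 \<or> \<not> F (p 0) (p 1)" using False by (auto simp: p_def)
  qed auto
  then show ?thesis ..
qed

section \<open>Pendant sets\<close>

abbreviation "R w \<equiv> (\<lambda>x y. E x y \<and> x \<in> (V - W) \<union> {w} \<and> y \<in> (V - W) \<union> {w})"

lemma Tset_self: "w \<in> Tset V E W w" unfolding Tset_def reachable_def by simp

lemma Tset_memb: "x \<in> Tset V E W w \<Longrightarrow> x = w \<or> x \<in> V - W"
proof -
  assume "x \<in> Tset V E W w"
  then have "(R w)\<^sup>*\<^sup>* w x" unfolding Tset_def reachable_def by simp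
  then show ?thesis by (cases rule: rtranclp.cases) auto
qed

lemma Tset_add: "x \<in> Tset V E W w \<Longrightarrow> E x y \<Longrightarrow> y \<notin> W \<Longrightarrow> y \<in> Tset V E W w"
proof -
  assume x: "x \<in> Tset V E W w" and e: "E x y" and y: "y \<notin> W"
  have "R w x y" using Tset_memb[OF x] e y EV[OF e] by auto
  then show ?thesis using x unfolding Tset_def reachable_def
    by (auto intro: rtranclp.rtrancl_into_rtrancl)
qed

lemma escape0:
  assumes w: "w \<in> W" and x: "x \<in> Tset V E W w" "x \<noteq> w" and e: "E x y" and y: "y \<in> W"
  shows "y = w"
proof (rule ccontr)
  assume yw: "y \<noteq> w"
  have "reachable (R w) w x" using x unfolding Tset_def by simp
  define L where "L = gdist (R w) w x"
  obtain q where q: "q 0 = w" "q L = x" "\<forall>t<L. R w (q t) (q (Suc t))"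
    using gdist_walk[OF \<open>reachable (R w) w x\<close>] unfolding walk_of_len_def L_def by blast
  have qinj: "inj_on q {0..L}" using shortest_inj[OF q L_def] .
  have L1: "L \<ge> 1" using q x by (cases L) auto
  have qnW: "q t \<in> V - W" if "1 \<le> t" "t \<le> L" for t
  proof -
    have t1: "Suc (t - 1) = t" "t - 1 < L" using that by auto
    then have "R w (q (t - 1)) (q (Suc (t - 1)))" using q(3) by blast
    then have "q (Suc (t - 1)) \<in> (V - W) \<union> {w}" by blast
    then have "q t \<in> (V - W) \<union> {w}" using t1 by metis
    moreover have "q t \<noteq> w" using qinj q(1) that unfolding inj_on_def by force
    ultimately show ?thesis by auto
  qed
  define p where "p t = (if t \<le> L then q t else y)" for t
  show False
  proof (rule ear_contra[OF comp Esym, where m="L + 1" and p=p])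
    show "1 \<le> L + 1" by simp
    show "p 0 \<in> W" "p (L + 1) \<in> W" using q w y by (auto simp: p_def)
    show "p 0 \<noteq> p (L + 1)" using q yw by (auto simp: p_def)
    show "p t \<in> V - W" if "0 < t" "t < L + 1" for t using qnW that by (auto simp: p_def)
    show "inj_on p {0..L + 1}"
    proof (rule inj_onI)
      fix a b assume ab: "a \<in> {0..L+1}" "b \<in> {0..L+1}" "p a = p b"
      have ne: "q t \<noteq> y" if "t \<le> L" for t
        using qnW[of t] that q(1) yw y by (cases "t = 0") auto
      show "a = b"
      proof (cases "a \<le> L"; cases "b \<le> L")
        assume "a \<le> L" "b \<le> L" then show ?thesis using qinj ab by (auto simp: p_def inj_on_def)
      qed (use ab ne in \<open>auto simp: p_def\<close>)
    qed
    show "E (p t) (p (Suc t))" if "t < L + 1" for t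
    proof (cases "t < L")
      case True then show ?thesis using q by (auto simp: p_def)
    next
      case False then have "t = L" using that by auto
      then show ?thesis using q e by (auto simp: p_def)
    qed
    show "2 \<le> L + 1 \<or> \<not> F (p 0) (p 1)" using L1 by auto
  qed
qed

lemma escape:
  assumes w: "w \<in> W" and x: "x \<in> Tset V E W w" "x \<noteq> w" and e: "E x y"
  shows "y \<in> Tset V E W w"
proof (cases "y \<in> W")
  case True then show ?thesis using escape0[OF assms True] Tset_self by simp
next
  case False then show ?thesis using Tset_add x e by auto
qed

lemma Tset_W: "w \<in> W \<Longrightarrow> x \<in> Tset V E W w \<Longrightarrow> x \<in> W \<Longrightarrow> x = w"
  using Tset_memb by blast

lemma Tset_V: "w \<in> W \<Longrightarrow> Tset V E W w \<subseteq> V"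
  using Tset_memb WV by blast

lemma pendant:
  assumes w: "w \<in> W" and v: "v \<in> Tset V E W w" and z: "z \<in> V" "z \<notin> Tset V E W w"
  shows "gdist E z v = gdist E z w + gdist E w v"
proof -
  have vV: "v \<in> V" using Tset_V w v by (meson subsetD)
  have wV: "w \<in> V" using w WV by auto
  define L where "L = gdist E z v"
  obtain p where p: "p 0 = z" "p L = v" "\<forall>t<L. E (p t) (p (Suc t))"
    using gdist_walk[OF conn[OF z(1) vV]] unfolding walk_of_len_def L_def by blast
  define m where "m = (LEAST t. p t \<in> Tset V E W w)"
  have pm: "p m \<in> Tset V E W w" unfolding m_def by (rule LeastI[of _ L]) (use p v in simp)
  have mL: "m \<le> L" unfolding m_def by (rule Least_le) (use p v in simp)
  have m0: "m \<noteq> 0"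
  proof
    assume "m = 0" with pm p(1) z(2) show False by simp
  qed
  have pm1: "p (m - 1) \<notin> Tset V E W w"
    using not_less_Least[of "m - 1" "\<lambda>t. p t \<in> Tset V E W w"] m0 unfolding m_def by auto
  have m1: "Suc (m-1) = m" "m - 1 < L" using m0 mL by auto
  have "E (p (m-1)) (p (Suc (m-1)))" using p(3) m1(2) by blast
  then have e: "E (p (m-1)) (p m)" using m1(1) by simp
  have pmw: "p m = w"
  proof (rule ccontr)
    assume "p m \<noteq> w"
    then have "p (m-1) \<in> Tset V E W w" using escape[OF w pm] Esym[OF e] by blast
    with pm1 show False by simp
  qed
  have "walk_of_len E m z (p m)" using walk_prefix[of p z L E m] p mL by blast
  then have "gdist E z w \<le> m" using pmw gdist_le by metis
  moreover have "walk_of_len E (L - m) (p m) (p L)" using walk_suffix[of L E p m] p mL by blast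
  then have "gdist E w v \<le> L - m" using pmw p(2) gdist_le by metis
  ultimately have "gdist E z w + gdist E w v \<le> gdist E z v" using mL L_def by auto
  moreover have "gdist E z v \<le> gdist E z w + gdist E w v"
    using gdist_tri conn z(1) wV vV by blast
  ultimately show ?thesis by simp
qed

lemma T_W: "i \<le> k \<Longrightarrow> u i \<in> T i" unfolding T_def using Tset_self .

end



context NEs begin

lemma uE': "1 \<le> i \<Longrightarrow> i \<le> k \<Longrightarrow> E (u i) (u (i - 1))"
  using uE[of "i - 1"] Esym by simp

lemma pair:
  assumes i: "1 \<le> i" "i < k" and v: "v \<in> V" "v \<notin> T i"
  shows "gdist E (u i) v = 1 + min (gdist E (u (i - 1)) v) (gdist E (u (Suc i)) v)"
proof -
  have uiV: "u i \<in> V" "u (i - 1) \<in> V" "u (Suc i) \<in> V" using uV i by auto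
  have e1: "E (u i) (u (i - 1))" using uE' i by auto
  have e2: "E (u i) (u (Suc i))" using uE i by auto
  have up1: "gdist E (u i) v \<le> 1 + gdist E (u (i - 1)) v"
    using gdist_tri[OF conn[OF uiV(1) uiV(2)] conn[OF uiV(2) v(1)]] gdist_edge[of E, OF e1] by simp
  have up2: "gdist E (u i) v \<le> 1 + gdist E (u (Suc i)) v"
    using gdist_tri[OF conn[OF uiV(1) uiV(3)] conn[OF uiV(3) v(1)]] gdist_edge[of E, OF e2] by simp
  define L where "L = gdist E (u i) v"
  obtain p where p: "p 0 = u i" "p L = v" "\<forall>t<L. E (p t) (p (Suc t))"
    using gdist_walk[OF conn[OF uiV(1) v(1)]] unfolding walk_of_len_def L_def by blast
  have pinj: "inj_on p {0..L}" using shortest_inj[OF p L_def] .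
  have uiT: "u i \<in> T i" using T_W i by simp
  have L0: "L \<noteq> 0" using p v uiT by (metis)
  have e: "E (u i) (p 1)" using p L0 by (metis One_nat_def gr0I)
  have low: "min (gdist E (u (i - 1)) v) (gdist E (u (Suc i)) v) \<le> L - 1"
  proof (cases "p 1 \<in> W")
    case True
    have "walk_of_len E (L - 1) (p 1) (p L)" using walk_suffix[of L E p 1] p L0 by auto
    then have g: "gdist E (p 1) v \<le> L - 1" using p gdist_le by metis
    have "p 1 = u (i - 1) \<or> p 1 = u (Suc i)" using interior_nb[OF i e True] .
    then show ?thesis using g by auto
  next
    case False
    have uiW: "u i \<in> W" using uW i by simp
    have inT: "p t \<in> T i" if "1 \<le> t" "t \<le> L" for t
      using that
    proof (induction t)
      case 0 then show ?case by simp
    next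
      case (Suc t)
      show ?case
      proof (cases "t = 0")
        case True
        then show ?thesis using Tset_add[of "u i" "u i" "p 1"] Tset_self e False
          unfolding T_def by simp
      next
        case False
        then have pt: "p t \<in> T i" using Suc by auto
        have "p t \<noteq> u i"
        proof
          assume "p t = u i"
          then have "p t = p 0" using p(1) by simp
          moreover have "t \<in> {0..L}" "0 \<in> {0..L}" using Suc.prems by auto
          ultimately have "t = 0" using pinj unfolding inj_on_def by blast
          with False show False by simp
        qed
        moreover have "E (p t) (p (Suc t))" using p Suc.prems by auto
        ultimately show ?thesis using escape[OF uiW] pt unfolding T_def by blast
      qed
    qed
    then have "v \<in> T i" using p L0 by (metis One_nat_def le_refl less_one not_less)
    then show ?thesis using v by simp
  qed
  show ?thesis using up1 up2 low L0 unfolding L_def by linarith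
qed

lemma T_disj:
  assumes ij: "i \<in> {1..4}" "j \<in> {1..4}" "i \<noteq> j" and v: "v \<in> T i"
  shows "v \<notin> T j"
proof
  assume vj: "v \<in> T j"
  have ik: "i \<le> k" "j \<le> k" using ij k5 by auto
  have W: "u i \<in> W" "u j \<in> W" using uW ik by auto
  have VV: "u i \<in> V" "u j \<in> V" using uV ik by auto
  have nij: "u i \<noteq> u j" using uinj ik ij by blast
  have "u j \<notin> T i"
  proof
    assume "u j \<in> T i"
    then have "u j = u i" using Tset_W[OF W(1) _ W(2)] unfolding T_def by blast
    with nij show False by simp
  qed
  then have d1: "gdist E (u j) v = gdist E (u j) (u i) + gdist E (u i) v"
    using pendant[OF W(1) _ VV(2)] v unfolding T_def by blast
  have "u i \<notin> T j"
  proof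
    assume "u i \<in> T j"
    then have "u i = u j" using Tset_W[OF W(2) _ W(1)] unfolding T_def by blast
    with nij show False by simp
  qed
  then have d2: "gdist E (u i) v = gdist E (u i) (u j) + gdist E (u j) v"
    using pendant[OF W(2) _ VV(1)] vj unfolding T_def by blast
  have "gdist E (u i) (u j) = gdist E (u j) (u i)" using gdist_sym Esym by blast
  then have "gdist E (u i) (u j) = 0" using d1 d2 by simp
  then show False using gdist_0[OF conn[OF VV]] nij by blast
qed

end



context NEs begin

definition Go :: "nat \<Rightarrow> nat \<Rightarrow> bool" where
  "Go x y \<longleftrightarrow> E x y \<and> x \<notin> u ` {1..4} \<and> y \<notin> u ` {1..4}"

definition psi :: "nat \<Rightarrow> int" where
  "psi x = (if reachable Go (u 0) x then min 5 (int (gdist Go (u 0) x)) else 5)"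

definition phi :: "nat \<Rightarrow> int" where
  "phi x = (if x \<in> T 1 then 1 else if x \<in> T 2 then 2 else if x \<in> T 3 then 3
            else if x \<in> T 4 then 4 else psi x)"

lemma Go_sym: "Go x y \<Longrightarrow> Go y x" unfolding Go_def using Esym by blast

lemma far:
  assumes "reachable Go (u 0) (u 5)" shows "gdist Go (u 0) (u 5) \<ge> 5"
proof (rule ccontr)
  assume neg: "\<not> ?thesis"
  define l where "l = gdist Go (u 0) (u 5)"
  have l5: "l < 5" using neg by (simp add: l_def)
  obtain r where r: "r 0 = u 0" "r l = u 5" "\<forall>t<l. Go (r t) (r (Suc t))"
    using gdist_walk[OF assms] unfolding walk_of_len_def l_def by blast
  have rinj: "inj_on r {0..l}" using shortest_inj[OF r l_def] .
  have u05: "u 0 \<noteq> u 5" using uinj k5 by fastforce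
  have l0: "l \<ge> 1" using r u05 by (cases l) auto
  have rnP: "r t \<notin> u ` {1..4}" if "0 < t" "t < l" for t
    using r(3) that unfolding Go_def by blast
  have rne: "r t \<notin> u ` {0..5}" if "0 < t" "t < l" for t
  proof
    assume "r t \<in> u ` {0..5}"
    then obtain a where a: "a \<in> {0..5}" "r t = u a" by blast
    have "a \<noteq> 0"
    proof
      assume "a = 0" then have "r t = r 0" using a r by simp
      then show False using rinj that unfolding inj_on_def by fastforce
    qed
    moreover have "a \<noteq> 5"
    proof
      assume "a = 5" then have "r t = r l" using a r by simp
      then show False using rinj that unfolding inj_on_def by fastforce
    qed
    ultimately have "a \<in> {1..4}" using a by auto
    then show False using rnP[OF that] a by blast
  qed
  define c where "c t = (if t \<le> 5 then u t else r (5 + l - t))" for t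
  have cr: "c t = r (5 + l - t)" if "5 \<le> t" "t \<le> 5 + l" for t
    using that r by (cases "t = 5") (auto simp: c_def)
  have cu: "c t = u t" if "t \<le> 5" for t using that by (simp add: c_def)
  have cyc: "has_cycle_len E (5 + l)"
    unfolding has_cycle_len_def
  proof (intro conjI exI[of _ c])
    show "3 \<le> 5 + l" by simp
    show "inj_on c {0..<5 + l}"
    proof (rule inj_onI)
      fix a b assume ab: "a \<in> {0..<5 + l}" "b \<in> {0..<5 + l}" "c a = c b"
      have mix: False if "x \<le> 5" "5 < y" "y < 5 + l" "c x = c y" for x y
      proof -
        have "c y = r (5 + l - y)" using cr that by auto
        moreover have "0 < 5 + l - y" "5 + l - y < l" using that by auto
        ultimately have "c y \<notin> u ` {0..5}" using rne by auto
        moreover have "c x \<in> u ` {0..5}" using cu[OF that(1)] that(1) by auto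
        ultimately show False using that(4) by simp
      qed
      show "a = b"
      proof (cases "a \<le> 5"; cases "b \<le> 5")
        assume "a \<le> 5" "b \<le> 5"
        then show ?thesis using ab cu uinj k5 by auto
      next
        assume "a \<le> 5" "\<not> b \<le> 5" then show ?thesis using mix[of a b] ab by auto
      next
        assume "\<not> a \<le> 5" "b \<le> 5" then show ?thesis using mix[of b a] ab by auto
      next
        assume "\<not> a \<le> 5" "\<not> b \<le> 5"
        then have "r (5 + l - a) = r (5 + l - b)" using ab cr by auto
        moreover have "5 + l - a \<in> {0..l}" "5 + l - b \<in> {0..l}" using \<open>\<not> a \<le> 5\<close> \<open>\<not> b \<le> 5\<close> by auto
        ultimately have "5 + l - a = 5 + l - b" using rinj unfolding inj_on_def by blast
        then show ?thesis using ab by auto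
      qed
    qed
    show "\<forall>t<5 + l. E (c t) (c (Suc t mod (5 + l)))"
    proof (intro allI impI)
      fix t assume t: "t < 5 + l"
      consider "t < 5" | "5 \<le> t" "Suc t < 5 + l" | "Suc t = 5 + l" using t by linarith
      then show "E (c t) (c (Suc t mod (5 + l)))"
      proof cases
        case 1
        then have "Suc t mod (5 + l) = Suc t" using l0 by simp
        then show ?thesis using uE[of t] 1 k5 cu[of t] cu[of "Suc t"] by simp
      next
        case 2
        then have "Suc t mod (5 + l) = Suc t" by simp
        moreover have "c t = r (5 + l - t)" "c (Suc t) = r (4 + l - t)" using cr 2 by auto
        moreover have "Go (r (4 + l - t)) (r (Suc (4 + l - t)))" using r(3) 2 by auto
        moreover have "Suc (4 + l - t) = 5 + l - t" using 2 by auto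
        ultimately show ?thesis using Esym unfolding Go_def by auto
      next
        case 3
        then have "Suc t mod (5 + l) = 0" by simp
        moreover have "c t = r 1" using cr[of t] 3 l0 by auto
        moreover have "c 0 = r 0" using cu r by simp
        moreover have "Go (r 0) (r 1)" using r(3) l0 by auto
        ultimately show ?thesis using Esym unfolding Go_def by auto
      qed
    qed
  qed
  then have "girth E \<le> enat (5 + l)" unfolding girth_def by (auto intro: Inf_lower)
  then have "(14::enat) < enat (5 + l)" using gir by (rule order.strict_trans2[rotated])
  then have "14 < 5 + l" by (simp add: numeral_eq_enat)
  then show False using l5 by simp
qed

lemma uT_iff: "i \<le> k \<Longrightarrow> j \<le> k \<Longrightarrow> u j \<in> T i \<longleftrightarrow> i = j"
proof
  assume ij: "i \<le> k" "j \<le> k" "u j \<in> T i"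
  then have "u j = u i" using Tset_W[OF uW[of i]] uW[of j] unfolding T_def by blast
  then show "i = j" using uinj ij by auto
next
  assume "i \<le> k" "j \<le> k" "i = j" then show "u j \<in> T i" using T_W by simp
qed

lemma phi_T: "i \<in> {1..4} \<Longrightarrow> x \<in> T i \<Longrightarrow> phi x = int i"
proof -
  assume i: "i \<in> {1..4}" and x: "x \<in> T i"
  have d: "j \<in> {1..4} \<Longrightarrow> j \<noteq> i \<Longrightarrow> x \<notin> T j" for j using T_disj[OF i _ _ x] by metis
  have "i = 1 \<or> i = 2 \<or> i = 3 \<or> i = 4" using i by auto
  then show ?thesis using x d[of 1] d[of 2] d[of 3] unfolding phi_def by auto
qed

lemma notT: "x \<notin> T 1 \<Longrightarrow> x \<notin> T 2 \<Longrightarrow> x \<notin> T 3 \<Longrightarrow> x \<notin> T 4 \<Longrightarrow> phi x = psi x"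
  unfolding phi_def by simp

lemma psi_u0: "psi (u 0) = 0"
  unfolding psi_def reachable_def using gdist_self[of Go] by simp

lemma psi_u5: "psi (u 5) = 5"
  unfolding psi_def using far by auto

lemma phi_u: "i \<le> 5 \<Longrightarrow> phi (u i) = int i"
proof -
  assume i: "i \<le> 5"
  show ?thesis
  proof (cases "i \<in> {1..4}")
    case True then show ?thesis using phi_T T_W k5 by auto
  next
    case False
    then have "i = 0 \<or> i = 5" using i by auto
    moreover have "u i \<notin> T j" if "j \<in> {1..4}" for j using uT_iff[of j i] that i k5 False by auto
    ultimately show ?thesis using notT psi_u0 psi_u5 by auto
  qed
qed

lemma psi_lip: assumes "Go x y" shows "\<bar>psi x - psi y\<bar> \<le> 1"
proof (cases "reachable Go (u 0) x")
  case True
  have ry: "reachable Go (u 0) y" using True assms unfolding reachable_def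
    by (auto intro: rtranclp.rtrancl_into_rtrancl)
  have "gdist Go (u 0) y \<le> gdist Go (u 0) x + 1"
    using gdist_le[OF walk_append[OF gdist_walk[OF True] walk_edge[of Go, OF assms]]] .
  moreover have "gdist Go (u 0) x \<le> gdist Go (u 0) y + 1"
    using gdist_le[OF walk_append[OF gdist_walk[OF ry] walk_edge[of Go, OF Go_sym[OF assms]]]] .
  ultimately show ?thesis using True ry unfolding psi_def by auto
next
  case False
  have "\<not> reachable Go (u 0) y"
  proof
    assume "reachable Go (u 0) y"
    then have "reachable Go (u 0) x" using Go_sym[OF assms] unfolding reachable_def
      by (auto intro: rtranclp.rtrancl_into_rtrancl)
    with False show False by simp
  qed
  then show ?thesis using False unfolding psi_def by simp
qed

lemma phi_lip_T:
  assumes e: "E x y" and i: "i \<in> {1..4}" and x: "x \<in> T i"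
  shows "\<bar>phi x - phi y\<bar> \<le> 1"
proof (cases "y \<in> T i")
  case True then show ?thesis using phi_T i x by simp
next
  case False
  have ik: "1 \<le> i" "i < k" using i k5 by auto
  have uiW: "u i \<in> W" using uW ik by simp
  have xu: "x = u i" using escape[OF uiW, of x y] x e False unfolding T_def by blast
  have yW: "y \<in> W" using Tset_add[of x "u i" y] x e False unfolding T_def by blast
  have "y = u (i - 1) \<or> y = u (Suc i)" using interior_nb[OF ik _ yW] e xu by simp
  then have "phi y = int i - 1 \<or> phi y = int i + 1" using phi_u i by auto
  then show ?thesis using phi_T[OF i x] by auto
qed

lemma noT_notP: assumes "\<not> (\<exists>i\<in>{1..4}. x \<in> T i)" shows "x \<notin> u ` {1..4}"
proof
  assume "x \<in> u ` {1..4}"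
  then obtain i where "i \<in> {1..4}" "x = u i" by blast
  then have "x \<in> T i" using T_W k5 by auto
  then show False using assms \<open>i \<in> {1..4}\<close> by blast
qed

lemma phi_lip: assumes e: "E x y" shows "\<bar>phi x - phi y\<bar> \<le> 1"
proof (cases "\<exists>i\<in>{1..4}. x \<in> T i")
  case True then show ?thesis using phi_lip_T e by blast
next
  case F1: False
  show ?thesis
  proof (cases "\<exists>i\<in>{1..4}. y \<in> T i")
    case True then show ?thesis using phi_lip_T[OF Esym[OF e]] by fastforce
  next
    case False
    have nx: "x \<notin> u ` {1..4}" "y \<notin> u ` {1..4}" using noT_notP F1 False by auto
    then have "Go x y" using e unfolding Go_def by simp
    moreover have "phi x = psi x" "phi y = psi y" using F1 False notT by auto
    ultimately show ?thesis using psi_lip by simp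
  qed
qed

lemma walk_phi:
  assumes "walk_of_len E m a b" shows "\<bar>phi a - phi b\<bar> \<le> int m"
proof -
  obtain p where p: "p 0 = a" "p m = b" "\<forall>i<m. E (p i) (p (Suc i))"
    using assms unfolding walk_of_len_def by blast
  have "\<bar>phi (p 0) - phi (p t)\<bar> \<le> int t" if "t \<le> m" for t
    using that
  proof (induction t)
    case 0 then show ?case by simp
  next
    case (Suc t)
    then have "\<bar>phi (p t) - phi (p (Suc t))\<bar> \<le> 1" using phi_lip p(3) by auto
    then show ?case using Suc by auto
  qed
  then show ?thesis using p by auto
qed

lemma walk_path: "a \<le> b \<Longrightarrow> b \<le> k \<Longrightarrow> walk_of_len E (b - a) (u a) (u b)"
  unfolding walk_of_len_def
  by (rule exI[of _ "\<lambda>t. u (a + t)"]) (auto intro!: uE)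

lemma path_dist: assumes "a \<le> 5" "b \<le> 5" shows "int (gdist E (u a) (u b)) = \<bar>int a - int b\<bar>"
proof -
  have V: "u a \<in> V" "u b \<in> V" using uV assms k5 by auto
  have "\<bar>phi (u a) - phi (u b)\<bar> \<le> int (gdist E (u a) (u b))"
    using walk_phi[OF gdist_walk[OF conn[OF V]]] .
  then have ge: "\<bar>int a - int b\<bar> \<le> int (gdist E (u a) (u b))" using phi_u assms by simp
  have "gdist E (u a) (u b) \<le> (if a \<le> b then b - a else a - b)"
  proof (cases "a \<le> b")
    case True then show ?thesis using gdist_le[OF walk_path[of a b]] assms k5 by simp
  next
    case False
    then have "walk_of_len E (a - b) (u b) (u a)" using walk_path[of b a] assms k5 by simp
    then have "walk_of_len E (a - b) (u a) (u b)" using walk_rev[of E] Esym by blast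
    then show ?thesis using False gdist_le by auto
  qed
  then show ?thesis using ge by (auto split: if_splits)
qed

end



lemma arith_X:
  fixes a0 a1 a2 a3 a4 a5 :: int
  assumes "a1 = 1 + min a0 a2" "a2 = 1 + min a1 a3" "a3 = 1 + min a2 a4" "a4 = 1 + min a3 a5"
    "\<bar>a1 - a0\<bar> \<le> 1" "\<bar>a2 - a1\<bar> \<le> 1" "\<bar>a3 - a2\<bar> \<le> 1" "\<bar>a4 - a3\<bar> \<le> 1" "\<bar>a5 - a4\<bar> \<le> 1"
  shows "0 \<le> a5 - a0 - 2 + 2 * ((if a1 < a0 then 1 else 0) + (if a2 < a1 then 1 else 0)
            + (if a3 < a2 then 1 else 0) + (if a4 < a3 then 1 else 0))"
  using assms unfolding min_def abs_le_iff by (smt (verit))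

context NEs begin

definition f :: "nat \<Rightarrow> nat \<Rightarrow> int" where "f j v = int (gdist E (u j) v)"
definition h :: "nat \<Rightarrow> nat \<Rightarrow> int" where
  "h j v = (if v \<in> T (Suc j) then 1 else if f (Suc j) v < f j v then -1 else 0)"

lemma f_lip: assumes "j < 5" "v \<in> V" shows "\<bar>f (Suc j) v - f j v\<bar> \<le> 1"
proof -
  have V: "u j \<in> V" "u (Suc j) \<in> V" using uV assms k5 by auto
  have e: "E (u j) (u (Suc j))" using uE assms k5 by auto
  have "gdist E (u j) v \<le> gdist E (u j) (u (Suc j)) + gdist E (u (Suc j)) v"
    using gdist_tri conn V assms(2) by blast
  moreover have "gdist E (u (Suc j)) v \<le> gdist E (u (Suc j)) (u j) + gdist E (u j) v"
    using gdist_tri conn V assms(2) by blast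
  moreover have "gdist E (u j) (u (Suc j)) \<le> 1" "gdist E (u (Suc j)) (u j) \<le> 1"
    using gdist_edge[of E, OF e] gdist_edge[of E, OF Esym[OF e]] by auto
  ultimately show ?thesis unfolding f_def by linarith
qed

lemma swap_ineq:
  assumes j: "j < 4"
  shows "0 \<le> (\<Sum>v\<in>V. h j v)"
proof -
  define a where "a = u j"
  define b where "b = u (Suc j)"
  define c where "c = u (Suc (Suc j))"
  have jk: "Suc (Suc j) \<le> k" using j k5 by auto
  have abcV: "a \<in> V" "b \<in> V" "c \<in> V" using uV jk unfolding a_def b_def c_def by auto
  have dab: "gdist E a b = 1" using path_dist[of j "Suc j"] j unfolding a_def b_def by simp
  have dac: "gdist E a c = 2" using path_dist[of j "Suc (Suc j)"] j unfolding a_def c_def by simp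
  have ab: "a \<noteq> b" "a \<noteq> c" "b \<noteq> c"
  proof -
    show "a \<noteq> b" using uinj[of j "Suc j"] jk unfolding a_def b_def by auto
    show "a \<noteq> c" using uinj[of j "Suc (Suc j)"] jk unfolding a_def c_def by auto
    show "b \<noteq> c" using uinj[of "Suc j" "Suc (Suc j)"] jk unfolding b_def c_def by auto
  qed
  have Eab: "E a b" "E b c" using uE jk unfolding a_def b_def c_def by auto
  have sp: "s a \<subseteq> V - {a}" using ne abcV unfolding nash_equilibrium_def strategy_profile_def by blast
  have bs: "b \<in> s a" using orient jk unfolding a_def b_def by auto
  have cs: "c \<notin> s a"
  proof
    assume "c \<in> s a"
    then have "E a c" using abcV ab unfolding Gs_def by auto
    then show False using gdist_edge[of E, OF \<open>E a c\<close>] dac by simp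
  qed
  define sa where "sa = insert c (s a - {b})"
  define s' where "s' = s(a := sa)"
  have fin: "finite (s a)" using sp finite_subset by blast
  have "card (s a) > 0" using fin bs card_gt_0_iff by blast
  then have card_eq: "card sa = card (s a)"
    using fin bs cs unfolding sa_def by (simp add: card_insert_if card_Diff_singleton)
  have sa_sub: "sa \<subseteq> V - {a}" using sp abcV ab unfolding sa_def by auto
  have cost_le: "cost n \<alpha> s a \<le> cost n \<alpha> s' a"
    using ne abcV(1) sa_sub unfolding nash_equilibrium_def s'_def by blast
  define G' where "G' = Gs n s'"
  have G'1: "G' x y" if "E x y" "{x, y} \<noteq> {a, b}" for x y
  proof -
    have xy: "x \<in> V" "y \<in> V" "x \<noteq> y" "y \<in> s x \<or> x \<in> s y" using that(1) unfolding Gs_def by auto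
    have "y \<in> s' x \<or> x \<in> s' y"
    proof (cases "y \<in> s x")
      case True
      then show ?thesis using that(2) unfolding s'_def sa_def by (cases "x = a") auto
    next
      case False
      then have "x \<in> s y" using xy by simp
      then show ?thesis using that(2) unfolding s'_def sa_def by (cases "y = a") auto
    qed
    then show ?thesis using xy unfolding G'_def Gs_def by auto
  qed
  have G'ac: "G' a c" using abcV ab unfolding G'_def Gs_def s'_def sa_def by auto
  have avoid_sub: "G' x y" if "E x y" "x \<noteq> z \<and> y \<noteq> z" "z = a \<or> z = b" for x y z
    using G'1 that by (auto simp: doubleton_eq)
  have pv: "\<exists>m. walk_of_len G' m a v \<and> int m \<le> f j v + h j v" if v: "v \<in> V" for v
  proof -
    have fj: "f j v = int (gdist E a v)" "f (Suc j) v = int (gdist E b v)"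
      "f (Suc (Suc j)) v = int (gdist E c v)" unfolding f_def a_def b_def c_def by auto
    consider (A) "v \<in> T (Suc j)" | (B) "v \<notin> T (Suc j)" "f (Suc j) v < f j v"
      | (C) "v \<notin> T (Suc j)" "\<not> f (Suc j) v < f j v" by blast
    then show ?thesis
    proof cases
      case A
      have bW: "b \<in> W" using uW jk unfolding b_def by auto
      have "a \<notin> T (Suc j)" using uT_iff[of "Suc j" j] jk unfolding a_def by auto
      then have "gdist E a v = gdist E a b + gdist E b v"
        using pendant[OF bW _ abcV(1)] A unfolding T_def b_def by blast
      then have dav: "gdist E a v = 1 + gdist E b v" using dab by simp
      define L where "L = gdist E b v"
      obtain p where p: "p 0 = b" "p L = v" "\<forall>t<L. E (p t) (p (Suc t))"
        using gdist_walk[OF conn[OF abcV(2) v]] unfolding walk_of_len_def L_def by blast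
      have w1: "walk_of_len (\<lambda>x y. E x y \<and> x \<noteq> a \<and> y \<noteq> a) L b v"
        by (rule shortest_avoid[OF p L_def]) (use ab dav L_def in auto)
      have w1': "walk_of_len G' L b v" using walk_mono[OF _ w1] avoid_sub by blast
      have Gcb: "G' c b" using G'1[OF Esym[OF Eab(2)]] ab by (auto simp: doubleton_eq)
      have "walk_of_len G' (1 + (1 + L)) a v"
        using walk_append[OF walk_edge[of G', OF G'ac] walk_append[OF walk_edge[of G', OF Gcb] w1']] .
      moreover have "h j v = 1" using A unfolding h_def by simp
      ultimately show ?thesis using fj dav L_def by (intro exI[of _ "2 + L"]) auto
    next
      case B
      have iB: "1 \<le> Suc j" "Suc j < k" using jk by auto
      have pr: "gdist E b v = 1 + min (gdist E a v) (gdist E c v)"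
        using pair[OF iB v B(1)] unfolding a_def b_def c_def by simp
      then have dcv: "gdist E c v + 2 = gdist E a v" "gdist E c v < gdist E b v"
        using B(2) f_lip[of j v] j v fj by auto
      define L where "L = gdist E c v"
      obtain p where p: "p 0 = c" "p L = v" "\<forall>t<L. E (p t) (p (Suc t))"
        using gdist_walk[OF conn[OF abcV(3) v]] unfolding walk_of_len_def L_def by blast
      have w1: "walk_of_len (\<lambda>x y. E x y \<and> x \<noteq> b \<and> y \<noteq> b) L c v"
        by (rule shortest_avoid[OF p L_def]) (use ab dcv L_def in auto)
      have w1': "walk_of_len G' L c v" using walk_mono[OF _ w1] avoid_sub by blast
      have "walk_of_len G' (1 + L) a v" using walk_append[OF walk_edge[of G', OF G'ac] w1'] .
      moreover have "h j v = -1" using B unfolding h_def by simp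
      ultimately show ?thesis using fj dcv L_def by (intro exI[of _ "1 + L"]) auto
    next
      case C
      define L where "L = gdist E a v"
      obtain p where p: "p 0 = a" "p L = v" "\<forall>t<L. E (p t) (p (Suc t))"
        using gdist_walk[OF conn[OF abcV(1) v]] unfolding walk_of_len_def L_def by blast
      have w1: "walk_of_len (\<lambda>x y. E x y \<and> x \<noteq> b \<and> y \<noteq> b) L a v"
        by (rule shortest_avoid[OF p L_def]) (use ab C fj L_def in auto)
      have w1': "walk_of_len G' L a v" using walk_mono[OF _ w1] avoid_sub by blast
      moreover have "h j v = 0" using C unfolding h_def by simp
      ultimately show ?thesis using fj L_def by (intro exI[of _ L]) auto
    qed
  qed
  have reach': "\<forall>v\<in>V. reachable G' a v" using pv walk_imp_reach by blast
  have bound: "real (gdist G' a v) \<le> real (gdist E a v) + real_of_int (h j v)" if vV: "v \<in> V" for v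
  proof -
    obtain m where m: "walk_of_len G' m a v" "int m \<le> f j v + h j v" using pv[OF vV] by blast
    have "gdist G' a v \<le> m" using gdist_le[OF m(1)] .
    then have "int (gdist G' a v) \<le> int (gdist E a v) + h j v" using m(2) unfolding f_def a_def by simp
    then show ?thesis by linarith
  qed
  have rE: "\<forall>v\<in>V. reachable E a v" using conn abcV(1) by blast
  have c1: "cost n \<alpha> s a = ereal (\<alpha> * real (card (s a)) + (\<Sum>v\<in>V - {a}. real (gdist E a v)))"
    unfolding cost_def by (subst if_P[OF rE]) (rule refl)
  have reach'': "\<forall>v\<in>V. reachable (Gs n s') a v" using reach' unfolding G'_def .
  have sa': "s' a = sa" unfolding s'_def by simp
  have c2: "cost n \<alpha> s' a = ereal (\<alpha> * real (card sa) + (\<Sum>v\<in>V - {a}. real (gdist G' a v)))"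
    unfolding cost_def G'_def sa'[symmetric] by (subst if_P[OF reach'']) (rule refl)
  have "\<alpha> * real (card (s a)) + (\<Sum>v\<in>V - {a}. real (gdist E a v))
      \<le> \<alpha> * real (card sa) + (\<Sum>v\<in>V - {a}. real (gdist G' a v))"
    using cost_le unfolding c1 c2 by (rule ereal_less_eq(3)[THEN iffD1])
  then have "(\<Sum>v\<in>V - {a}. real (gdist E a v)) \<le> (\<Sum>v\<in>V - {a}. real (gdist G' a v))"
    using card_eq by simp
  also have "\<dots> \<le> (\<Sum>v\<in>V - {a}. real (gdist E a v) + real_of_int (h j v))"
    by (rule sum_mono) (use bound in auto)
  also have "\<dots> = (\<Sum>v\<in>V - {a}. real (gdist E a v)) + (\<Sum>v\<in>V - {a}. real_of_int (h j v))"
    by (rule sum.distrib)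
  finally have "0 \<le> (\<Sum>v\<in>V - {a}. real_of_int (h j v))" by simp
  then have "0 \<le> real_of_int (\<Sum>v\<in>V - {a}. h j v)" by (simp only: of_int_sum)
  then have h1: "0 \<le> (\<Sum>v\<in>V - {a}. h j v)" by (simp only: of_int_0_le_iff)
  have "h j a = 0"
  proof -
    have "a \<notin> T (Suc j)" using uT_iff[of "Suc j" j] jk unfolding a_def by auto
    moreover have "gdist E b a = gdist E a b" using gdist_sym[where E=E] Esym by blast
    then have "f j a = 0" "f (Suc j) a = 1" using dab gdist_self[where E=E and u=a]
      unfolding f_def a_def b_def by auto
    ultimately show ?thesis unfolding h_def by simp
  qed
  moreover have "(\<Sum>v\<in>V. h j v) = h j a + (\<Sum>v\<in>V - {a}. h j v)"
    by (rule sum.remove) (use abcV(1) in auto)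
  ultimately show ?thesis using h1 by simp
qed

end



context NEs begin

definition cnt :: "nat \<Rightarrow> int" where
  "cnt v = (if v \<in> T 1 then 1 else 0) + (if v \<in> T 2 then 1 else 0)
         + (if v \<in> T 3 then 1 else 0) + (if v \<in> T 4 then 1 else 0)"

lemma f_T:
  assumes i: "i \<in> {1..4}" and v: "v \<in> T i" and j: "j \<le> 5"
  shows "f j v = \<bar>int j - int i\<bar> + f i v"
proof (cases "j = i")
  case True then show ?thesis by simp
next
  case False
  have ik: "i \<le> k" "j \<le> k" using i j k5 by auto
  have uj: "u j \<notin> T i" using uT_iff[OF ik] False by simp
  have "gdist E (u j) v = gdist E (u j) (u i) + gdist E (u i) v"
    using pendant[OF uW[OF ik(1)] _ uV[OF ik(2)]] v uj unfolding T_def by blast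
  moreover have "int (gdist E (u j) (u i)) = \<bar>int j - int i\<bar>" using path_dist[of j i] i j by simp
  ultimately show ?thesis unfolding f_def by simp
qed

lemma vertex_ineq:
  assumes v: "v \<in> V"
  shows "0 \<le> f 5 v - f 0 v - 2 + cnt v - 2 * (h 0 v + h 1 v + h 2 v + h 3 v)"
proof (cases "\<exists>i\<in>{1..4}. v \<in> T i")
  case True
  then obtain i where i: "i \<in> {1..4}" "v \<in> T i" by blast
  have other: "v \<notin> T j" if "j \<in> {1..4}" "j \<noteq> i" for j using T_disj[OF i(1) that(1) _ i(2)] that(2) by auto
  have F: "f 0 v = \<bar>0 - int i\<bar> + f i v" "f 1 v = \<bar>1 - int i\<bar> + f i v" "f 2 v = \<bar>2 - int i\<bar> + f i v"
    "f 3 v = \<bar>3 - int i\<bar> + f i v" "f 4 v = \<bar>4 - int i\<bar> + f i v" "f 5 v = \<bar>5 - int i\<bar> + f i v"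
    using f_T[OF i, of 0] f_T[OF i, of 1] f_T[OF i, of 2] f_T[OF i, of 3] f_T[OF i, of 4] f_T[OF i, of 5]
    by auto
  have "i = 1 \<or> i = 2 \<or> i = 3 \<or> i = 4" using i by auto
  then show ?thesis
  proof (elim disjE)
    assume "i = 1" then show ?thesis using F i other[of 2] other[of 3] other[of 4]
      unfolding h_def cnt_def by (simp add: eval_nat_numeral)
  next
    assume "i = 2" then show ?thesis using F i other[of 1] other[of 3] other[of 4]
      unfolding h_def cnt_def by (simp add: eval_nat_numeral)
  next
    assume "i = 3" then show ?thesis using F i other[of 1] other[of 2] other[of 4]
      unfolding h_def cnt_def by (simp add: eval_nat_numeral)
  next
    assume "i = 4" then show ?thesis using F i other[of 1] other[of 2] other[of 3]
      unfolding h_def cnt_def by (simp add: eval_nat_numeral)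
  qed
next
  case False
  then have nT: "v \<notin> T 1" "v \<notin> T 2" "v \<notin> T 3" "v \<notin> T 4" by auto
  have P: "f i v = 1 + min (f (i - 1) v) (f (Suc i) v)" if "1 \<le> i" "i \<le> 4" for i
  proof -
    have "v \<notin> T i" using False that by auto
    then have "gdist E (u i) v = 1 + min (gdist E (u (i - 1)) v) (gdist E (u (Suc i)) v)"
      using pair[of i v] that k5 v by auto
    then show ?thesis unfolding f_def by simp
  qed
  have P1: "f 1 v = 1 + min (f 0 v) (f 2 v)" using P[of 1] by (simp add: numeral_eq_Suc)
  have P2: "f 2 v = 1 + min (f 1 v) (f 3 v)" using P[of 2] by (simp add: numeral_eq_Suc)
  have P3: "f 3 v = 1 + min (f 2 v) (f 4 v)" using P[of 3] by (simp add: numeral_eq_Suc)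
  have P4: "f 4 v = 1 + min (f 3 v) (f 5 v)" using P[of 4] by (simp add: numeral_eq_Suc)
  have L: "\<bar>f 1 v - f 0 v\<bar> \<le> 1" "\<bar>f 2 v - f 1 v\<bar> \<le> 1" "\<bar>f 3 v - f 2 v\<bar> \<le> 1"
    "\<bar>f 4 v - f 3 v\<bar> \<le> 1" "\<bar>f 5 v - f 4 v\<bar> \<le> 1"
    using f_lip[OF _ v, of 0] f_lip[OF _ v, of 1] f_lip[OF _ v, of 2] f_lip[OF _ v, of 3] f_lip[OF _ v, of 4]
    by (simp_all add: numeral_eq_Suc)
  have H: "h 0 v = (if f 1 v < f 0 v then -1 else 0)" "h 1 v = (if f 2 v < f 1 v then -1 else 0)"
    "h 2 v = (if f 3 v < f 2 v then -1 else 0)" "h 3 v = (if f 4 v < f 3 v then -1 else 0)"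
    using nT unfolding h_def by (simp_all add: numeral_eq_Suc)
  have C: "cnt v = 0" using nT unfolding cnt_def by simp
  have "0 \<le> f 5 v - f 0 v - 2 + 2 * ((if f 1 v < f 0 v then 1 else 0) + (if f 2 v < f 1 v then 1 else 0)
            + (if f 3 v < f 2 v then 1 else 0) + (if f 4 v < f 3 v then 1 else 0))"
    by (rule arith_X[OF P1 P2 P3 P4 L])
  then show ?thesis unfolding H C by (simp split: if_splits)
qed

lemma Dsum_f: assumes "j \<le> 5" shows "int (Dsum n E (u j)) = (\<Sum>v\<in>V. f j v)"
proof -
  have uj: "u j \<in> V" using uV assms k5 by auto
  have "(\<Sum>v\<in>V. gdist E (u j) v) = gdist E (u j) (u j) + (\<Sum>v\<in>V - {u j}. gdist E (u j) v)"
    by (rule sum.remove) (use uj in auto)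
  then have "(\<Sum>v\<in>V. gdist E (u j) v) = Dsum n E (u j)" unfolding Dsum_def by (simp add: gdist_self)
  then show ?thesis unfolding f_def by (simp flip: of_nat_sum)
qed

lemma card_T: assumes "i \<in> {1..4}" shows "int (card (T i)) = (\<Sum>v\<in>V. if v \<in> T i then 1 else 0)"
proof -
  have sub: "T i \<subseteq> V" using Tset_V[OF uW[of i]] assms k5 unfolding T_def by auto
  have "(\<Sum>v\<in>V. if v \<in> T i then (1::int) else 0) = (\<Sum>v\<in>V \<inter> T i. 1)"
    by (rule sum.inter_restrict[symmetric]) simp
  also have "V \<inter> T i = T i" using sub by auto
  finally show ?thesis by simp
qed

lemma main:
  "int (Dsum n E (u 5)) - int (Dsum n E (u 0)) \<ge> 2 * int n - int (\<Sum>i\<in>{1..4}. card (T i))"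
proof -
  have s4: "{1..4::nat} = {1, 2, 3, 4}" by auto
  have "int (\<Sum>i\<in>{1..4}. card (T i)) = int (card (T 1)) + int (card (T 2)) + int (card (T 3)) + int (card (T 4))"
    unfolding s4 by simp
  also have "\<dots> = (\<Sum>v\<in>V. cnt v)"
  proof -
    have "(1::nat) \<in> {1..4}" "(2::nat) \<in> {1..4}" "(3::nat) \<in> {1..4}" "(4::nat) \<in> {1..4}" by auto
    note c = card_T[OF this(1)] card_T[OF this(2)] card_T[OF this(3)] card_T[OF this(4)]
    show ?thesis unfolding cnt_def c by (simp only: sum.distrib)
  qed
  finally have cs: "int (\<Sum>i\<in>{1..4}. card (T i)) = (\<Sum>v\<in>V. cnt v)" .
  have hs: "0 \<le> (\<Sum>v\<in>V. h 0 v + h 1 v + h 2 v + h 3 v)"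
    using swap_ineq[of 0] swap_ineq[of 1] swap_ineq[of 2] swap_ineq[of 3] by (simp add: sum.distrib)
  have "0 \<le> (\<Sum>v\<in>V. f 5 v - f 0 v - 2 + cnt v - 2 * (h 0 v + h 1 v + h 2 v + h 3 v))"
    by (rule sum_nonneg) (use vertex_ineq in auto)
  also have "\<dots> = (\<Sum>v\<in>V. f 5 v) - (\<Sum>v\<in>V. f 0 v) - 2 * int n + (\<Sum>v\<in>V. cnt v)
      - 2 * (\<Sum>v\<in>V. h 0 v + h 1 v + h 2 v + h 3 v)"
    by (simp add: sum.distrib sum_subtractf sum_distrib_left)
  finally show ?thesis using cs hs Dsum_f[of 5] Dsum_f[of 0] by simp
qed

end

theorem proposition5:
  fixes n :: nat and \<alpha> :: real and s :: "nat \<Rightarrow> nat set"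
    and W :: "nat set" and F :: "nat \<Rightarrow> nat \<Rightarrow> bool"
    and u :: "nat \<Rightarrow> nat" and k :: nat
  assumes "\<alpha> > 0"
    and "nash_equilibrium n \<alpha> s"
    and "two_ec_component {1..n} (Gs n s) W F"
    and "card W \<ge> 3"
    and "girth (Gs n s) > 14"
    and "two_path s W F u k"
    and "k \<ge> 5"
    and "\<forall>i<k. u (Suc i) \<in> s (u i)"
  shows "int (Dsum n (Gs n s) (u 5)) - int (Dsum n (Gs n s) (u 0))
           \<ge> 2 * int n - int (\<Sum>i\<in>{1..4}. card (Tset {1..n} (Gs n s) W (u i)))"
proof -
  interpret NEs n \<alpha> s W F u k
    by (rule NEs.intro) (use assms in auto)
  show ?thesis using main[unfolded T_def] .
qed

end
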